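(* Let $\mathcal{P}=(|K|,V)$ be a polyhedral model. For all $x\in|K|$ and every SLCS$_\eta$ formula $\Phi$: $\mathcal{P},x\models\Phi$ if and only if $\mathbb{F}(\mathcal{P}),\mathbb{F}(x)\models\Phi$.
   Context: Fix a set PL of proposition letters. A simplex $\sigma\subseteq\mathbb{R}^m$ is the convex hull of $d+1$ affinely independent points $v_0,\dots,v_d$; its faces are the simplices spanned by nonempty subsets of its vertices. Its relative interior (cell) is $\tilde\sigma=\{\sum_i\lambda_iv_i:\lambda_i\in(0,1],\sum_i\lambda_i=1\}$. A simplicial complex $K$ is a finite set of simplices in $\mathbb{R}^m$ closed under faces, any two of which intersect in a common face or in $\emptyset$. Its set of cells $\tilde K=\{\tilde\sigma:\sigma\in K\}$ is partially ordered by $\tilde\sigma_1\preceq\tilde\sigma_2$ iff $\tilde\sigma_1$ is contained in the topological closure of $\tilde\sigma_2$ (equivalently, $\sigma_1$ is a face of $\sigma_2$). The polyhedron $|K|$ is the union of the simplices of $K$ with the subspace topology; its cells partition $|K|$. A polyhedral model is $\mathcal{P}=(|K|,V)$ with $V:\mathrm{PL}\to\mathcal{P}(|K|)$ such that each $V(p)$ is a union of cells. Its cell poset model is $\mathbb{F}(\mathcal{P})=(\tilde K,\preceq,\mathcal{V})$ with $\tilde\sigma\in\mathcal{V}(p)$ iff $\tilde\sigma\subseteq V(p)$; for $x\in|K|$, $\mathbb{F}(x)$ is the unique cell containing $x$. A topological path from $x$ is a continuous $\pi:[0,1]\to|K|$ with $\pi(0)=x$. In a poset $(W,\preceq)$ a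 $\pm$-path of length $\ell\ge2$ from $w$ is $\pi:\{0,\dots,\ell\}\to W$ with $\pi(0)=w$, consecutive elements comparable under $\preceq$, $\pi(0)\preceq\pi(1)$ and $\pi(\ell)\preceq\pi(\ell-1)$. SLCS$_\eta$ formulas: $\Phi::=p\mid\neg\Phi\mid\Phi_1\wedge\Phi_2\mid\eta(\Phi_1,\Phi_2)$, $p\in\mathrm{PL}$. On polyhedral models: $x\models p$ iff $x\in V(p)$; negation, conjunction standard; $x\models\eta(\Phi_1,\Phi_2)$ iff some topological path $\pi$ from $x$ has $\pi(1)\models\Phi_2$ and $\pi(r)\models\Phi_1$ for all $r\in[0,1)$. On poset models $(W,\preceq,\mathcal{V})$: $w\models p$ iff $w\in\mathcal{V}(p)$; negation, conjunction standard; $w\models\eta(\Phi_1,\Phi_2)$ iff some $\pm$-path $\pi$ of length $\ell$ from $w$ has $\pi(\ell)\models\Phi_2$ and $\pi(i)\models\Phi_1$ for all $0\le i<\ell$. *)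

theory Defs
  imports "HOL-Analysis.Analysis"
begin

definition simplex_on :: "'a::euclidean_space set \<Rightarrow> 'a set \<Rightarrow> bool" where
  "simplex_on V s \<longleftrightarrow> finite V \<and> V \<noteq> {} \<and> \<not> affine_dependent V \<and> s = convex hull V"

definition is_simplex :: "'a::euclidean_space set \<Rightarrow> bool" where
  "is_simplex s \<longleftrightarrow> (\<exists>V. simplex_on V s)"

definition simplex_face :: "'a::euclidean_space set \<Rightarrow> 'a set \<Rightarrow> bool" where
  "simplex_face t s \<longleftrightarrow> (\<exists>V W. simplex_on V s \<and> W \<subseteq> V \<and> W \<noteq> {} \<and> t = convex hull W)"

definition cell :: "'a::euclidean_space set \<Rightarrow> 'a set" where
  "cell s = {y. \<exists>V l. simplex_on V s \<and> (\<forall>v\<in>V. 0 < l v \<and> l v \<le> 1) \<and> sum l V = 1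
                    \<and> y = (\<Sum>v\<in>V. l v *\<^sub>R v)}"

definition simplicial_complex :: "'a::euclidean_space set set \<Rightarrow> bool" where
  "simplicial_complex K \<longleftrightarrow> finite K \<and> (\<forall>s\<in>K. is_simplex s)
     \<and> (\<forall>s\<in>K. \<forall>t. simplex_face t s \<longrightarrow> t \<in> K)
     \<and> (\<forall>s\<in>K. \<forall>t\<in>K. s \<inter> t = {} \<or> (simplex_face (s \<inter> t) s \<and> simplex_face (s \<inter> t) t))"

definition polyhedron :: "'a::euclidean_space set set \<Rightarrow> 'a set" where
  "polyhedron K = \<Union>K"

definition cells :: "'a::euclidean_space set set \<Rightarrow> 'a set set" where
  "cells K = cell ` K"

definition cell_le :: "'a::euclidean_space set \<Rightarrow> 'a set \<Rightarrow> bool" where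
  "cell_le c1 c2 \<longleftrightarrow> c1 \<subseteq> closure c2"

definition polyhedral_valuation :: "'a::euclidean_space set set \<Rightarrow> ('p \<Rightarrow> 'a set) \<Rightarrow> bool" where
  "polyhedral_valuation K V \<longleftrightarrow> (\<forall>p. \<exists>C \<subseteq> cells K. V p = \<Union>C)"

definition cell_val :: "'a::euclidean_space set set \<Rightarrow> ('p \<Rightarrow> 'a set) \<Rightarrow> 'p \<Rightarrow> 'a set set" where
  "cell_val K V p = {c \<in> cells K. c \<subseteq> V p}"

definition cell_of :: "'a::euclidean_space set set \<Rightarrow> 'a \<Rightarrow> 'a set" where
  "cell_of K x = (THE c. c \<in> cells K \<and> x \<in> c)"

datatype 'p form = Atom 'p | Neg "'p form" | Conj "'p form" "'p form" | Eta "'p form" "'p form"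

primrec sat_poly :: "'a::euclidean_space set set \<Rightarrow> ('p \<Rightarrow> 'a set) \<Rightarrow> 'p form \<Rightarrow> 'a \<Rightarrow> bool" where
  "sat_poly K V (Atom p) x \<longleftrightarrow> x \<in> V p"
| "sat_poly K V (Neg f) x \<longleftrightarrow> \<not> sat_poly K V f x"
| "sat_poly K V (Conj f g) x \<longleftrightarrow> sat_poly K V f x \<and> sat_poly K V g x"
| "sat_poly K V (Eta f g) x \<longleftrightarrow>
     (\<exists>\<pi>::real \<Rightarrow> 'a. continuous_on {0..1} \<pi> \<and> \<pi> ` {0..1} \<subseteq> polyhedron K \<and> \<pi> 0 = x
        \<and> sat_poly K V g (\<pi> 1) \<and> (\<forall>r\<in>{0..<1}. sat_poly K V f (\<pi> r)))"

definition pm_path :: "'w set \<Rightarrow> ('w \<Rightarrow> 'w \<Rightarrow> bool) \<Rightarrow> 'w \<Rightarrow> nat \<Rightarrow> (nat \<Rightarrow> 'w) \<Rightarrow> bool" where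
  "pm_path W R w l \<pi> \<longleftrightarrow> l \<ge> 2 \<and> \<pi> 0 = w \<and> (\<forall>i\<le>l. \<pi> i \<in> W)
     \<and> (\<forall>i<l. R (\<pi> i) (\<pi> (Suc i)) \<or> R (\<pi> (Suc i)) (\<pi> i))
     \<and> R (\<pi> 0) (\<pi> 1) \<and> R (\<pi> l) (\<pi> (l - 1))"

primrec sat_poset :: "'w set \<Rightarrow> ('w \<Rightarrow> 'w \<Rightarrow> bool) \<Rightarrow> ('p \<Rightarrow> 'w set) \<Rightarrow> 'p form \<Rightarrow> 'w \<Rightarrow> bool" where
  "sat_poset W R Vs (Atom p) w \<longleftrightarrow> w \<in> Vs p"
| "sat_poset W R Vs (Neg f) w \<longleftrightarrow> \<not> sat_poset W R Vs f w"
| "sat_poset W R Vs (Conj f g) w \<longleftrightarrow> sat_poset W R Vs f w \<and> sat_poset W R Vs g w"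
| "sat_poset W R Vs (Eta f g) w \<longleftrightarrow>
     (\<exists>l \<pi>. pm_path W R w l \<pi> \<and> sat_poset W R Vs g (\<pi> l) \<and> (\<forall>i<l. sat_poset W R Vs f (\<pi> i)))"

end

theory Submission
  imports Defs
begin

lemma simplex_on_props:
  assumes "simplex_on V s"
  shows "convex s" "compact s" "closed s" "s \<noteq> {}"
  using assms unfolding simplex_on_def
  by (auto simp: convex_convex_hull finite_imp_compact compact_convex_hull compact_imp_closed)

lemma cell_eq_on:
  assumes "simplex_on V s"
  shows "{y. \<exists>l. (\<forall>v\<in>V. 0 < l v \<and> l v \<le> 1) \<and> sum l V = 1 \<and> y = (\<Sum>v\<in>V. l v *\<^sub>R v)}
         = rel_interior s"
proof -
  have f: "finite V" and ind: "\<not> affine_dependent V" and s: "s = convex hull V"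
    using assms by (auto simp: simplex_on_def)
  have "rel_interior s = {y. \<exists>u. (\<forall>x \<in> V. 0 < u x) \<and> sum u V = 1 \<and> sum (\<lambda>x. u x *\<^sub>R x) V = y}"
    using rel_interior_convex_hull_explicit[OF ind] s by simp
  moreover have le1: "\<And>(u::'a \<Rightarrow> real) v. (\<forall>x \<in> V. 0 < u x) \<Longrightarrow> sum u V = 1 \<Longrightarrow> v \<in> V \<Longrightarrow> u v \<le> 1"
  proof -
    fix u :: "'a \<Rightarrow> real" and v assume a: "\<forall>x \<in> V. 0 < u x" "sum u V = 1" "v \<in> V"
    have "u v \<le> sum u V"
      using a f by (intro member_le_sum) (auto simp: less_imp_le)
    then show "u v \<le> 1" using a(2) by simp
  qed
  ultimately show ?thesis
    apply (intro set_eqI iffI)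
     apply (auto)[1]
    apply clarsimp
    by (metis le1)
qed

lemma cell_eq:
  assumes "is_simplex s"
  shows "cell s = rel_interior s"
proof -
  obtain V where V: "simplex_on V s" using assms is_simplex_def by blast
  show ?thesis
  proof
    show "cell s \<subseteq> rel_interior s"
      unfolding cell_def using cell_eq_on by blast
    show "rel_interior s \<subseteq> cell s"
      unfolding cell_def using cell_eq_on[OF V] V by blast
  qed
qed

lemma simplex_face_face_of:
  assumes "simplex_face t s"
  shows "t face_of s"
  using assms unfolding simplex_face_def simplex_on_def
  using face_of_convex_hull_affine_independent by blast

lemma sc_simplex: "simplicial_complex K \<Longrightarrow> s \<in> K \<Longrightarrow> \<exists>V. simplex_on V s"
  unfolding simplicial_complex_def is_simplex_def by blast

lemma sc_props:
  assumes "simplicial_complex K" "s \<in> K"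
  shows "convex s" "compact s" "closed s" "s \<noteq> {}" "cell s = rel_interior s"
    "closure (cell s) = s" "cell s \<noteq> {}" "cell s \<subseteq> s"
proof -
  obtain V where V: "simplex_on V s" using sc_simplex[OF assms] by blast
  note p = simplex_on_props[OF V]
  show "convex s" "compact s" "closed s" "s \<noteq> {}" using p by auto
  show c: "cell s = rel_interior s" using cell_eq V is_simplex_def by blast
  show "closure (cell s) = s" using c p convex_closure_rel_interior closure_closed by metis
  show "cell s \<noteq> {}" using c p rel_interior_eq_empty by metis
  show "cell s \<subseteq> s" using c rel_interior_subset by metis
qed

lemma sc_ri_sub:
  assumes K: "simplicial_complex K" and s: "s \<in> K" and t: "t \<in> K"
    and y: "y \<in> rel_interior t" "y \<in> s"
  shows "t \<subseteq> s"
proof -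
  have yt: "y \<in> t" using y rel_interior_subset by blast
  then have "s \<inter> t \<noteq> {}" using y by blast
  then have "simplex_face (s \<inter> t) t" using K s t unfolding simplicial_complex_def by blast
  then have f: "(s \<inter> t) face_of t" by (rule simplex_face_face_of)
  have "s \<inter> t = t"
  proof (rule ccontr)
    assume "s \<inter> t \<noteq> t"
    then have "(s \<inter> t) \<inter> rel_interior t = {}" using face_of_disjoint_rel_interior f by blast
    then show False using y yt by blast
  qed
  then show ?thesis by blast
qed

lemma sc_cover:
  assumes K: "simplicial_complex K" and y: "y \<in> polyhedron K"
  shows "\<exists>t\<in>K. y \<in> rel_interior t"
proof -
  obtain s where s: "s \<in> K" "y \<in> s" using y unfolding polyhedron_def by blast
  obtain V where V: "simplex_on V s" using sc_simplex[OF K s(1)] by blast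
  have f: "finite V" and ind: "\<not> affine_dependent V" and sV: "s = convex hull V"
    using V by (auto simp: simplex_on_def)
  obtain u where u: "\<forall>x\<in>V. 0 \<le> u x" "sum u V = 1" "(\<Sum>x\<in>V. u x *\<^sub>R x) = y"
    using s(2) sV convex_hull_finite[OF f] by auto
  define W where "W = {v\<in>V. 0 < u v}"
  have WV: "W \<subseteq> V" unfolding W_def by auto
  have fW: "finite W" using f WV finite_subset by blast
  have sumW: "sum u W = 1"
  proof -
    have "sum u V = sum u W"
      by (rule sum.mono_neutral_right[OF f WV]) (use u(1) in \<open>auto simp: W_def\<close>)
    then show ?thesis using u(2) by simp
  qed
  have yW: "(\<Sum>x\<in>W. u x *\<^sub>R x) = y"
  proof -
    have "(\<Sum>x\<in>V. u x *\<^sub>R x) = (\<Sum>x\<in>W. u x *\<^sub>R x)"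
      by (rule sum.mono_neutral_right[OF f WV]) (use u(1) in \<open>auto simp: W_def\<close>)
    then show ?thesis using u(3) by simp
  qed
  have Wne: "W \<noteq> {}" using sumW by auto
  have indW: "\<not> affine_dependent W" using ind WV affine_dependent_subset by blast
  have face: "simplex_face (convex hull W) s"
    unfolding simplex_face_def using V WV Wne by blast
  then have tK: "convex hull W \<in> K" using K s(1) unfolding simplicial_complex_def by blast
  have "y \<in> rel_interior (convex hull W)"
    unfolding rel_interior_convex_hull_explicit[OF indW]
    using sumW yW by (auto simp: W_def)
  then show ?thesis using tK by blast
qed

lemma sc_ri_unique:
  assumes K: "simplicial_complex K" and "s \<in> K" "t \<in> K"
    and "y \<in> rel_interior s" "y \<in> rel_interior t"
  shows "s = t"
  using sc_ri_sub[OF K] assms rel_interior_subset by (metis subset_antisym subsetD)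

lemma cell_of_props:
  assumes K: "simplicial_complex K" and y: "y \<in> polyhedron K"
  shows "cell_of K y \<in> cells K" "y \<in> cell_of K y"
    "\<And>c. c \<in> cells K \<Longrightarrow> y \<in> c \<Longrightarrow> cell_of K y = c"
proof -
  obtain t where t: "t \<in> K" "y \<in> rel_interior t" using sc_cover[OF K y] by blast
  have ex: "cell t \<in> cells K \<and> y \<in> cell t" using t sc_props[OF K t(1)] by (auto simp: cells_def)
  have un: "\<And>c. c \<in> cells K \<Longrightarrow> y \<in> c \<Longrightarrow> c = cell t"
  proof -
    fix c assume c: "c \<in> cells K" "y \<in> c"
    then obtain s where s: "s \<in> K" "c = cell s" by (auto simp: cells_def)
    then have "y \<in> rel_interior s" using c sc_props[OF K s(1)] by simp
    then have "s = t" using sc_ri_unique[OF K s(1) t(1)] t(2) by blast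
    then show "c = cell t" using s by simp
  qed
  have eq: "cell_of K y = cell t"
    unfolding cell_of_def using ex un by (intro the_equality) auto
  show "cell_of K y \<in> cells K" "y \<in> cell_of K y" using eq ex by auto
  show "\<And>c. c \<in> cells K \<Longrightarrow> y \<in> c \<Longrightarrow> cell_of K y = c" using eq un by auto
qed

lemma cell_of_le:
  assumes K: "simplicial_complex K" and s: "s \<in> K" and y: "y \<in> s"
  shows "cell_of K y \<subseteq> s"
proof -
  have yP: "y \<in> polyhedron K" using s y by (auto simp: polyhedron_def)
  obtain t where t: "t \<in> K" "cell_of K y = cell t"
    using cell_of_props(1)[OF K yP] by (auto simp: cells_def)
  have "y \<in> rel_interior t" using cell_of_props(2)[OF K yP] t sc_props[OF K t(1)] by simp
  then have "t \<subseteq> s" using sc_ri_sub[OF K s t(1)] y by blast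
  then show ?thesis using t sc_props[OF K t(1)] by blast
qed

lemma cells_sub_poly:
  assumes K: "simplicial_complex K" and c: "c \<in> cells K"
  shows "c \<subseteq> polyhedron K"
  using c sc_props(8)[OF K] by (auto simp: cells_def polyhedron_def)

lemma seg_down:
  assumes K: "simplicial_complex K" and c: "c \<in> cells K" and d: "d \<in> cells K"
    and le: "cell_le c d" and a: "a \<in> d" and b: "b \<in> c" and u: "u \<in> {0..<1}"
  shows "linepath a b u \<in> d"
proof -
  obtain t where t: "t \<in> K" "d = cell t" using d by (auto simp: cells_def)
  note p = sc_props[OF K t(1)]
  have bt: "b \<in> closure t" using le b t p unfolding cell_le_def by auto
  have ar: "a \<in> rel_interior t" using a t p by simp
  have "b - (1 - u) *\<^sub>R (b - a) \<in> rel_interior t"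
    using rel_interior_closure_convex_shrink[OF p(1) ar bt] u by auto
  moreover have "b - (1 - u) *\<^sub>R (b - a) = linepath a b u"
    by (simp add: linepath_def algebra_simps)
  ultimately show ?thesis using t p by simp
qed

lemma seg_up:
  assumes K: "simplicial_complex K" and c: "c \<in> cells K" and d: "d \<in> cells K"
    and le: "cell_le c d" and a: "a \<in> c" and b: "b \<in> d" and u: "u \<in> {0..1}"
  shows "linepath a b u \<in> c \<union> d"
proof (cases "u = 0")
  case True then show ?thesis using a by (simp add: linepath_def)
next
  case False
  obtain t where t: "t \<in> K" "d = cell t" using d by (auto simp: cells_def)
  note p = sc_props[OF K t(1)]
  have at: "a \<in> closure t" using le a t p unfolding cell_le_def by auto
  have br: "b \<in> rel_interior t" using b t p by simp
  have "a - u *\<^sub>R (a - b) \<in> rel_interior t"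
    using rel_interior_closure_convex_shrink[OF p(1) br at] u False by auto
  moreover have "a - u *\<^sub>R (a - b) = linepath a b u"
    by (simp add: linepath_def algebra_simps)
  ultimately show ?thesis using t p by simp
qed

lemma seg_sub:
  assumes K: "simplicial_complex K" and c: "c \<in> cells K" and d: "d \<in> cells K"
    and cmp: "cell_le c d \<or> cell_le d c" and a: "a \<in> c" and b: "b \<in> d"
  shows "path_image (linepath a b) \<subseteq> c \<union> d"
proof
  fix y assume "y \<in> path_image (linepath a b)"
  then obtain u where u: "u \<in> {0..1}" "y = linepath a b u" by (auto simp: path_image_def)
  show "y \<in> c \<union> d"
  proof (cases "cell_le c d")
    case True then show ?thesis using seg_up[OF K c d True a b u(1)] u by simp
  next
    case False
    then have le: "cell_le d c" using cmp by simp
    have "linepath b a (1 - u) \<in> d \<union> c" using seg_up[OF K d c le b a] u by simp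
    moreover have "linepath b a (1 - u) = linepath a b u" by (simp add: linepath_def)
    ultimately show ?thesis using u by auto
  qed
qed

lemma poset_to_path:
  assumes K: "simplicial_complex K" and x: "x \<in> polyhedron K"
    and pm: "pm_path (cells K) cell_le (cell_of K x) l \<pi>"
  shows "\<exists>\<gamma>. path \<gamma> \<and> \<gamma> 0 = x \<and> path_image \<gamma> \<subseteq> polyhedron K \<and> \<gamma> 1 \<in> \<pi> l
           \<and> (\<forall>r\<in>{0..<1}. \<exists>i<l. \<gamma> r \<in> \<pi> i)"
proof -
  define U where "U = \<Union>{\<pi> i |i. i < l}"
  have l2: "l \<ge> 2" and p0: "\<pi> 0 = cell_of K x" and inW: "\<And>i. i \<le> l \<Longrightarrow> \<pi> i \<in> cells K"
    and cmp: "\<And>i. i < l \<Longrightarrow> cell_le (\<pi> i) (\<pi> (Suc i)) \<or> cell_le (\<pi> (Suc i)) (\<pi> i)"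
    and last: "cell_le (\<pi> l) (\<pi> (l - 1))"
    using pm unfolding pm_path_def by auto
  have ne: "\<And>i. i \<le> l \<Longrightarrow> \<exists>a. a \<in> \<pi> i"
    using inW sc_props(7)[OF K] by (fastforce simp: cells_def)
  have sub: "\<And>i. i \<le> l \<Longrightarrow> \<pi> i \<subseteq> polyhedron K" using inW cells_sub_poly[OF K] by blast
  have inU: "\<And>i. i < l \<Longrightarrow> \<pi> i \<subseteq> U" unfolding U_def by blast
  have reach: "\<forall>b\<in>\<pi> k. \<exists>\<gamma>. path \<gamma> \<and> pathstart \<gamma> = x \<and> pathfinish \<gamma> = b
                  \<and> path_image \<gamma> \<subseteq> polyhedron K \<inter> U" if "k < l" for k
    using that
  proof (induction k)
    case 0
    show ?case
    proof
      fix b assume b: "b \<in> \<pi> 0"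
      have xc: "x \<in> \<pi> 0" using p0 cell_of_props(2)[OF K x] by simp
      have "path_image (linepath x b) \<subseteq> \<pi> 0 \<union> \<pi> 0"
      proof (rule seg_sub[OF K])
        show "\<pi> 0 \<in> cells K" using inW[of 0] by simp
        show "cell_le (\<pi> 0) (\<pi> 0) \<or> cell_le (\<pi> 0) (\<pi> 0)"
          unfolding cell_le_def using closure_subset by blast
      qed (use xc b inW[of 0] in auto)
      moreover have "\<pi> 0 \<subseteq> U" using inU[of 0] 0 by simp
      ultimately show "\<exists>\<gamma>. path \<gamma> \<and> pathstart \<gamma> = x \<and> pathfinish \<gamma> = b
                  \<and> path_image \<gamma> \<subseteq> polyhedron K \<inter> U"
        using sub[of 0] by (intro exI[of _ "linepath x b"]) (simp; blast)
    qed
  next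
    case (Suc k)
    show ?case
    proof
      fix b assume b: "b \<in> \<pi> (Suc k)"
      obtain a where a: "a \<in> \<pi> k" using ne[of k] Suc.prems by auto
      obtain g where g: "path g" "pathstart g = x" "pathfinish g = a"
          "path_image g \<subseteq> polyhedron K \<inter> U" using Suc.IH[OF Suc_lessD[OF Suc.prems]] a by blast
      have "path_image (linepath a b) \<subseteq> \<pi> k \<union> \<pi> (Suc k)"
        using seg_sub[OF K inW[of k] inW[of "Suc k"] cmp[of k] a b] Suc.prems by simp
      moreover have "\<pi> k \<union> \<pi> (Suc k) \<subseteq> U" using inU[of k] inU[of "Suc k"] Suc.prems by simp
      moreover have "\<pi> k \<union> \<pi> (Suc k) \<subseteq> polyhedron K" using sub[of k] sub[of "Suc k"] Suc.prems by auto
      ultimately have "path_image (g +++ linepath a b) \<subseteq> polyhedron K \<inter> U"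
        using g path_image_join[of g "linepath a b"] by auto
      then show "\<exists>\<gamma>. path \<gamma> \<and> pathstart \<gamma> = x \<and> pathfinish \<gamma> = b
                  \<and> path_image \<gamma> \<subseteq> polyhedron K \<inter> U"
        using g by (intro exI[of _ "g +++ linepath a b"]) simp
    qed
  qed
  obtain a where a: "a \<in> \<pi> (l - 1)" using ne[of "l - 1"] by auto
  obtain b where b: "b \<in> \<pi> l" using ne[of l] by auto
  obtain g where g: "path g" "pathstart g = x" "pathfinish g = a"
      "path_image g \<subseteq> polyhedron K \<inter> U" using reach[of "l - 1"] a l2 by auto
  have lm: "Suc (l - 1) = l" using l2 by simp
  have seg: "path_image (linepath a b) \<subseteq> \<pi> (l - 1) \<union> \<pi> l"
    using seg_sub[OF K inW[of "l - 1"] inW[of l] _ a b] last by simp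
  have "\<pi> (l - 1) \<union> \<pi> l \<subseteq> polyhedron K" using sub l2 by auto
  then have img: "path_image (g +++ linepath a b) \<subseteq> polyhedron K"
    using g seg path_image_join[of g "linepath a b"] by auto
  have before: "\<exists>i<l. (g +++ linepath a b) r \<in> \<pi> i" if r: "r \<in> {0..<1}" for r
  proof (cases "r \<le> 1/2")
    case True
    then have "(g +++ linepath a b) r = g (2 * r)" by (simp add: joinpaths_def)
    moreover have "g (2 * r) \<in> U" using g(4) True r by (auto simp: path_image_def)
    moreover obtain i where "i < l" "g (2 * r) \<in> \<pi> i"
      using \<open>g (2 * r) \<in> U\<close> unfolding U_def by auto
    ultimately show ?thesis by auto
  next
    case False
    then have "(g +++ linepath a b) r = linepath a b (2 * r - 1)" by (simp add: joinpaths_def)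
    moreover have "linepath a b (2 * r - 1) \<in> \<pi> (l - 1)"
      using seg_down[OF K inW[of l] inW[of "l - 1"] last a b, of "2 * r - 1"] False r by simp
    ultimately show ?thesis using l2 by (intro exI[of _ "l - 1"]) auto
  qed
  have pj: "path (g +++ linepath a b)" using g(1,3) by (intro path_join_imp) auto
  have s0: "(g +++ linepath a b) 0 = x" using g(2) by (simp add: joinpaths_def pathstart_def)
  have s1: "(g +++ linepath a b) 1 = b" by (simp add: joinpaths_def linepath_def)
  show ?thesis
    using pj s0 s1 img before b by (intro exI[of _ "g +++ linepath a b"]) simp
qed

lemma cell_le_cell_of:
  assumes K: "simplicial_complex K" and c: "c \<in> cells K" and y: "y \<in> closure c"
  shows "cell_le (cell_of K y) c"
proof -
  obtain s where s: "s \<in> K" "c = cell s" using c by (auto simp: cells_def)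
  have "closure c = s" using s sc_props(6)[OF K s(1)] by simp
  then have "y \<in> s" using y by simp
  then have "cell_of K y \<subseteq> s" using cell_of_le[OF K s(1)] by blast
  then show ?thesis unfolding cell_le_def using \<open>closure c = s\<close> by simp
qed

lemma path_to_poset:
  assumes K: "simplicial_complex K" and pg: "path \<gamma>"
    and img: "path_image \<gamma> \<subseteq> polyhedron K" and g0: "\<gamma> 0 = x"
  shows "\<exists>l \<pi>. pm_path (cells K) cell_le (cell_of K x) l \<pi> \<and> \<pi> l = cell_of K (\<gamma> 1)
           \<and> (\<forall>i<l. \<exists>r\<in>{0..<1}. \<pi> i = cell_of K (\<gamma> r))"
proof -
  have inP: "\<And>r. r \<in> {0..1} \<Longrightarrow> \<gamma> r \<in> polyhedron K"
    using img by (auto simp: path_image_def)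
  have cont: "continuous_on {0..1} \<gamma>" using pg by (simp add: path_def)
  define S where "S = (\<lambda>r. cell_of K (\<gamma> r)) ` {0..<1}"
  have Scells: "S \<subseteq> cells K"
    unfolding S_def using cell_of_props(1)[OF K] inP by auto
  have finK: "finite K" using K by (simp add: simplicial_complex_def)
  have finS: "finite S" using Scells finK by (metis cells_def finite_imageI finite_subset)
  define c0 where "c0 = cell_of K x"
  have c0S: "c0 \<in> S" unfolding S_def c0_def using g0 by force
  define Z where "Z = (\<lambda>c d. c \<in> S \<and> d \<in> S \<and> (cell_le c d \<or> cell_le d c))"
  define T where "T = {d. Z\<^sup>*\<^sup>* c0 d}"
  have TS: "T \<subseteq> S"
  proof
    fix d assume "d \<in> T"
    then have "Z\<^sup>*\<^sup>* c0 d" by (simp add: T_def)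
    then show "d \<in> S" by (induction rule: rtranclp_induct) (use c0S Z_def in auto)
  qed
  have c0T: "c0 \<in> T" by (simp add: T_def)
  have refl_le: "\<And>c. cell_le c c" unfolding cell_le_def using closure_subset by blast
  define CT where "CT = \<Union>(closure ` T)"
  define CN where "CN = \<Union>(closure ` (S - T))"
  have clCT: "closed CT" unfolding CT_def using finS TS finite_subset by (intro closed_Union) auto
  have clCN: "closed CN" unfolding CN_def using finS by (intro closed_Union) auto
  have cellS: "\<And>r. r \<in> {0..<1} \<Longrightarrow> cell_of K (\<gamma> r) \<in> S" unfolding S_def by blast
  have inown: "\<And>r. r \<in> {0..<1} \<Longrightarrow> \<gamma> r \<in> cell_of K (\<gamma> r)"
    using cell_of_props(2)[OF K] inP by auto
  define A where "A = {0..<1} \<inter> \<gamma> -` CT"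
  define B where "B = {0..<1} \<inter> \<gamma> -` CN"
  have contI: "continuous_on {0..<1} \<gamma>" using cont by (rule continuous_on_subset) auto
  have cA: "closedin (top_of_set {0..<1}) A"
    unfolding A_def by (rule continuous_closedin_preimage[OF contI clCT])
  have cB: "closedin (top_of_set {0..<1}) B"
    unfolding B_def by (rule continuous_closedin_preimage[OF contI clCN])
  have AB: "A \<union> B = {0..<1}"
  proof
    show "A \<union> B \<subseteq> {0..<1}" unfolding A_def B_def by blast
    show "{0..<1} \<subseteq> A \<union> B"
    proof
      fix r :: real assume r: "r \<in> {0..<1}"
      have m: "\<gamma> r \<in> closure (cell_of K (\<gamma> r))" using inown[OF r] closure_subset by blast
      show "r \<in> A \<union> B"
      proof (cases "cell_of K (\<gamma> r) \<in> T")
        case True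
        then have "\<gamma> r \<in> CT" unfolding CT_def using m by blast
        then show ?thesis using r unfolding A_def by blast
      next
        case False
        then have "\<gamma> r \<in> CN" unfolding CN_def using m cellS[OF r] by blast
        then show ?thesis using r unfolding B_def by blast
      qed
    qed
  qed
  have key: "\<And>r d. r \<in> {0..1} \<Longrightarrow> d \<in> S \<Longrightarrow> \<gamma> r \<in> closure d \<Longrightarrow> cell_le (cell_of K (\<gamma> r)) d"
    using cell_le_cell_of[OF K] Scells by blast
  have AT: "cell_of K (\<gamma> r) \<in> T" if r: "r \<in> A" for r
  proof -
    have r1: "r \<in> {0..<1}" using r unfolding A_def by blast
    obtain d where d: "d \<in> T" "\<gamma> r \<in> closure d" using r unfolding A_def CT_def by blast
    have "cell_le (cell_of K (\<gamma> r)) d" using key[of r d] d TS r1 by auto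
    then have "Z d (cell_of K (\<gamma> r))" unfolding Z_def using d TS cellS[OF r1] by blast
    then show ?thesis using d(1) unfolding T_def by (simp add: rtranclp.rtrancl_into_rtrancl)
  qed
  have ABd: "A \<inter> B = {}"
  proof (rule ccontr)
    assume "A \<inter> B \<noteq> {}"
    then obtain r where rA: "r \<in> A" and rB: "r \<in> B" by blast
    have r1: "r \<in> {0..<1}" using rA unfolding A_def by blast
    obtain d where d: "d \<in> S - T" "\<gamma> r \<in> closure d" using rB unfolding B_def CN_def by blast
    have "cell_le (cell_of K (\<gamma> r)) d" using key[of r d] d r1 by auto
    then have "Z (cell_of K (\<gamma> r)) d" unfolding Z_def using d cellS[OF r1] by blast
    then have "d \<in> T" using AT[OF rA] unfolding T_def by (simp add: rtranclp.rtrancl_into_rtrancl)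
    then show False using d by blast
  qed
  have "0 \<in> A"
  proof -
    have "x \<in> closure c0" using cell_of_props(2)[OF K] inP[of 0] g0 closure_subset unfolding c0_def by force
    then have "\<gamma> 0 \<in> CT" unfolding CT_def using c0T g0 by blast
    then show ?thesis unfolding A_def by simp
  qed
  then have Ane: "A \<noteq> {}" by blast
  have Bempty: "B = {}"
    using connected_Ico[of "0::real" 1] cA cB AB ABd Ane unfolding connected_closedin by blast
  have allT: "\<And>r. r \<in> {0..<1} \<Longrightarrow> cell_of K (\<gamma> r) \<in> T"
    using AT AB Bempty by blast
  have sub: "\<gamma> ` {0..<1} \<subseteq> CT"
  proof
    fix y assume "y \<in> \<gamma> ` {0..<1}"
    then obtain r where r: "r \<in> {0..<1}" "y = \<gamma> r" by blast
    then have "r \<in> A" using AB Bempty by blast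
    then show "y \<in> CT" using r unfolding A_def by blast
  qed
  have "\<gamma> ` closure {0..<1} \<subseteq> CT"
    by (rule image_closure_subset[OF _ clCT sub]) (use cont in simp)
  then have "\<gamma> 1 \<in> CT" by (simp add: image_subset_iff)
  then obtain d where dT: "d \<in> T" and d1: "\<gamma> 1 \<in> closure d" unfolding CT_def by blast
  have dle: "cell_le (cell_of K (\<gamma> 1)) d" using key[of 1 d] dT TS d1 by (simp add: subset_iff)
  have "Z\<^sup>*\<^sup>* c0 d" using dT by (simp add: T_def)
  then obtain n where "(Z ^^ n) c0 d" using rtranclp_imp_relpowp by metis
  then obtain f where f0: "f 0 = c0" and fn: "f n = d" and fZ: "\<forall>i<n. Z (f i) (f (Suc i))"
    using relpowp_fun_conv by metis
  have fS: "f i \<in> S" if "i \<le> n" for i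
  proof (cases i)
    case 0 then show ?thesis using f0 c0S by simp
  next
    case (Suc j) then show ?thesis using fZ that unfolding Z_def by auto
  qed
  define e where "e = cell_of K (\<gamma> 1)"
  have ecell: "e \<in> cells K" unfolding e_def using cell_of_props(1)[OF K] inP[of 1] by simp
  define \<pi> where "\<pi> = (\<lambda>i. if i = 0 then c0 else if i \<le> Suc n then f (i - 1) else e)"
  define l where "l = n + 2"
  have \<pi>S: "\<pi> i \<in> S" if "i < l" for i
    using that fS unfolding \<pi>_def l_def by (auto simp: c0S)
  have \<pi>l: "\<pi> l = e" unfolding \<pi>_def l_def by simp
  have pm: "pm_path (cells K) cell_le c0 l \<pi>"
    unfolding pm_path_def
  proof (intro conjI allI impI)
    show "2 \<le> l" unfolding l_def by simp
    show "\<pi> 0 = c0" unfolding \<pi>_def by simp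
    show "\<pi> i \<in> cells K" if "i \<le> l" for i
    proof (cases "i = l")
      case True then show ?thesis using \<pi>l ecell by simp
    next
      case False then show ?thesis using \<pi>S[of i] that Scells by auto
    qed
    show "cell_le (\<pi> i) (\<pi> (Suc i)) \<or> cell_le (\<pi> (Suc i)) (\<pi> i)" if il: "i < l" for i
    proof -
      consider "i = 0" | "1 \<le> i" "i \<le> n" | "i = Suc n" using il unfolding l_def by linarith
      then show ?thesis
      proof cases
        case 1 then show ?thesis unfolding \<pi>_def using f0 refl_le by simp
      next
        case 2
        then have a: "\<pi> i = f (i - 1)" "\<pi> (Suc i) = f (Suc (i - 1))" unfolding \<pi>_def by auto
        have "i - 1 < n" using 2 by linarith
        then have "Z (f (i - 1)) (f (Suc (i - 1)))" using fZ by blast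
        then show ?thesis using a unfolding Z_def by simp
      next
        case 3
        then have "\<pi> i = d" "\<pi> (Suc i) = e" unfolding \<pi>_def using fn by auto
        then show ?thesis using dle e_def by simp
      qed
    qed
    show "cell_le (\<pi> 0) (\<pi> 1)" unfolding \<pi>_def using f0 refl_le by simp
    have "\<pi> (l - 1) = d" unfolding \<pi>_def l_def using fn by simp
    then show "cell_le (\<pi> l) (\<pi> (l - 1))" using \<pi>l dle e_def by simp
  qed
  have "\<forall>i<l. \<exists>r\<in>{0..<1}. \<pi> i = cell_of K (\<gamma> r)"
    using \<pi>S unfolding S_def by blast
  then show ?thesis using pm \<pi>l unfolding c0_def e_def by blast
qed

theorem theorem1:
  fixes K :: "'a::euclidean_space set set" and V :: "'p \<Rightarrow> 'a set"
    and x :: 'a and \<Phi> :: "'p form"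
  assumes "simplicial_complex K" and "polyhedral_valuation K V" and "x \<in> polyhedron K"
  shows "sat_poly K V \<Phi> x \<longleftrightarrow> sat_poset (cells K) cell_le (cell_val K V) \<Phi> (cell_of K x)"
proof -
  note K = assms(1)
  have "\<forall>y\<in>polyhedron K. sat_poly K V \<Phi> y \<longleftrightarrow> sat_poset (cells K) cell_le (cell_val K V) \<Phi> (cell_of K y)"
  proof (induction \<Phi>)
    case (Atom p)
    show ?case
    proof
      fix y assume y: "y \<in> polyhedron K"
      obtain C where C: "C \<subseteq> cells K" "V p = \<Union>C"
        using assms(2) unfolding polyhedral_valuation_def by blast
      have cy: "cell_of K y \<in> cells K" "y \<in> cell_of K y" using cell_of_props(1,2)[OF K y] by auto
      show "sat_poly K V (Atom p) y \<longleftrightarrow> sat_poset (cells K) cell_le (cell_val K V) (Atom p) (cell_of K y)"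
      proof
        assume "sat_poly K V (Atom p) y"
        then obtain c where c: "c \<in> C" "y \<in> c" using C by auto
        then have "cell_of K y = c" using cell_of_props(3)[OF K y] C(1) by blast
        then have "cell_of K y \<subseteq> V p" using c C by blast
        then show "sat_poset (cells K) cell_le (cell_val K V) (Atom p) (cell_of K y)"
          using cy by (simp add: cell_val_def)
      next
        assume "sat_poset (cells K) cell_le (cell_val K V) (Atom p) (cell_of K y)"
        then have "cell_of K y \<subseteq> V p" by (simp add: cell_val_def)
        then show "sat_poly K V (Atom p) y" using cy by auto
      qed
    qed
  next
    case (Neg f) then show ?case by simp
  next
    case (Conj f g) then show ?case by simp
  next
    case (Eta f g)
    note Hf = Eta.IH(1) and Hg = Eta.IH(2)
    show ?case
    proof
      fix y assume y: "y \<in> polyhedron K"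
      show "sat_poly K V (Eta f g) y \<longleftrightarrow> sat_poset (cells K) cell_le (cell_val K V) (Eta f g) (cell_of K y)"
      proof
        assume "sat_poly K V (Eta f g) y"
        then obtain \<gamma> :: "real \<Rightarrow> 'a" where g: "continuous_on {0..1} \<gamma>" "\<gamma> ` {0..1} \<subseteq> polyhedron K"
          "\<gamma> 0 = y" "sat_poly K V g (\<gamma> 1)" "\<forall>r\<in>{0..<1}. sat_poly K V f (\<gamma> r)" by auto
        have inP: "\<And>r. r \<in> {0..1} \<Longrightarrow> \<gamma> r \<in> polyhedron K" using g(2) by auto
        obtain l \<pi> where lp: "pm_path (cells K) cell_le (cell_of K y) l \<pi>" "\<pi> l = cell_of K (\<gamma> 1)"
            "\<forall>i<l. \<exists>r\<in>{0..<1}. \<pi> i = cell_of K (\<gamma> r)"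
          using path_to_poset[of K \<gamma> y] K g(1,2,3) unfolding path_def path_image_def by blast
        have "sat_poset (cells K) cell_le (cell_val K V) g (\<pi> l)"
          using Hg inP[of 1] g(4) lp(2) by simp
        moreover have "\<forall>i<l. sat_poset (cells K) cell_le (cell_val K V) f (\<pi> i)"
        proof (intro allI impI)
          fix i assume "i < l"
          then obtain r where r: "r \<in> {0..<1}" "\<pi> i = cell_of K (\<gamma> r)" using lp(3) by blast
          have "\<gamma> r \<in> polyhedron K" using inP r(1) by auto
          then show "sat_poset (cells K) cell_le (cell_val K V) f (\<pi> i)"
            using Hf g(5) r by auto
        qed
        ultimately show "sat_poset (cells K) cell_le (cell_val K V) (Eta f g) (cell_of K y)"
          using lp(1) by auto
      next
        assume "sat_poset (cells K) cell_le (cell_val K V) (Eta f g) (cell_of K y)"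
        then obtain l \<pi> where lp: "pm_path (cells K) cell_le (cell_of K y) l \<pi>"
          "sat_poset (cells K) cell_le (cell_val K V) g (\<pi> l)"
          "\<forall>i<l. sat_poset (cells K) cell_le (cell_val K V) f (\<pi> i)" by auto
        have inW: "\<And>i. i \<le> l \<Longrightarrow> \<pi> i \<in> cells K" using lp(1) unfolding pm_path_def by blast
        obtain \<gamma> where ga: "path \<gamma>" "\<gamma> 0 = y" "path_image \<gamma> \<subseteq> polyhedron K" "\<gamma> 1 \<in> \<pi> l"
            "\<forall>r\<in>{0..<1}. \<exists>i<l. \<gamma> r \<in> \<pi> i"
          using poset_to_path[OF K y lp(1)] by blast
        have inP: "\<And>r. r \<in> {0..1} \<Longrightarrow> \<gamma> r \<in> polyhedron K"
          using ga(3) by (auto simp: path_image_def)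
        have "cell_of K (\<gamma> 1) = \<pi> l" using cell_of_props(3)[OF K inP[of 1] inW[of l] ga(4)] by simp
        then have G: "sat_poly K V g (\<gamma> 1)" using Hg inP[of 1] lp(2) by simp
        have F: "\<forall>r\<in>{0..<1}. sat_poly K V f (\<gamma> r)"
        proof
          fix r :: real assume r: "r \<in> {0..<1}"
          then obtain i where i: "i < l" "\<gamma> r \<in> \<pi> i" using ga(5) by blast
          have rP: "\<gamma> r \<in> polyhedron K" using inP r by auto
          have "cell_of K (\<gamma> r) = \<pi> i" using cell_of_props(3)[OF K rP inW[of i] i(2)] i(1) by simp
          then show "sat_poly K V f (\<gamma> r)" using Hf rP lp(3) i(1) by simp
        qed
        show "sat_poly K V (Eta f g) y"
          using ga(1,2,3) G F unfolding sat_poly.simps path_def path_image_def by blast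
      qed
    qed
  qed
  then show ?thesis using assms(3) by blast
qed

end
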